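(* Let $A\subseteq\mathbb{N}$, let $d,r\in\mathbb{N}$, let $B=\{a/d : a\in A\}\cap\mathbb{N}$ and let $C=\{a\in A : a\equiv 0 \pmod d\}$. If $A$ is $rd$-accessible, then (i) $B$ is $r$-accessible, and (ii) $C$ is $r$-accessible.
   Context: An $r$-coloring of a set $A$ is a function $\chi:A\to\{1,\dots,r\}$. For $D\subseteq\mathbb{N}=\{1,2,3,\dots\}$, a $k$-term $D$-diffsequence is a sequence of integers $x_1,\dots,x_k$ with $x_{i+1}-x_i\in D$ for all $1\le i\le k-1$. A set $D\subseteq\mathbb{N}$ is $r$-accessible if for every $r$-coloring of $\mathbb{N}$ and every $k\ge1$ there is a monochromatic $k$-term $D$-diffsequence in $\mathbb{N}$. *)

theory Defs
  imports Main
begin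

text \<open>Positive naturals N = {1,2,3,...} are represented as the natural numbers n with n >= 1.\<close>

definition r_coloring :: "nat \<Rightarrow> (nat \<Rightarrow> nat) \<Rightarrow> bool" where
  "r_coloring r \<chi> \<longleftrightarrow> (\<forall>n\<ge>1. \<chi> n \<in> {1..r})"

text \<open>A k-term D-diffsequence x_1,...,x_k (indexed here as x 0, ..., x (k-1)),
  lying in N.\<close>
definition diffseq_in_N :: "nat set \<Rightarrow> nat \<Rightarrow> (nat \<Rightarrow> nat) \<Rightarrow> bool" where
  "diffseq_in_N D k x \<longleftrightarrow>
     (\<forall>i<k. x i \<ge> 1) \<and>
     (\<forall>i. i + 1 < k \<longrightarrow> (\<exists>t\<in>D. int (x (i + 1)) - int (x i) = int t))"

definition monochromatic :: "(nat \<Rightarrow> nat) \<Rightarrow> nat \<Rightarrow> (nat \<Rightarrow> nat) \<Rightarrow> bool" where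
  "monochromatic \<chi> k x \<longleftrightarrow> (\<forall>i<k. \<forall>j<k. \<chi> (x i) = \<chi> (x j))"

definition accessible :: "nat \<Rightarrow> nat set \<Rightarrow> bool" where
  "accessible r D \<longleftrightarrow>
     (\<forall>\<chi>. r_coloring r \<chi> \<longrightarrow>
        (\<forall>k\<ge>1. \<exists>x. diffseq_in_N D k x \<and> monochromatic \<chi> k x))"

end

theory Submission
  imports Defs
begin

lemma col:
  assumes "r_coloring r \<chi>" "d \<ge> 1" "\<forall>n\<ge>1. f n \<ge> (1::nat)" "r \<ge> 1"
  shows "r_coloring (r*d) (\<lambda>n. 1 + n mod d + d*(\<chi> (f n) - 1))"
  unfolding r_coloring_def
proof (intro allI impI)
  fix n :: nat assume n: "n \<ge> 1"
  have c: "\<chi> (f n) \<in> {1..r}" using assms n unfolding r_coloring_def by auto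
  have a: "n mod d < d" using assms(2) by simp
  have b: "d*(\<chi> (f n) - 1) \<le> d*(r-1)" using c by (intro mult_le_mono2) auto
  have "d + d*(r-1) = r*d" using assms(4) by (cases r) auto
  then have "1 + n mod d + d*(\<chi> (f n) - 1) \<le> r*d" using a b by linarith
  then show "1 + n mod d + d*(\<chi> (f n) - 1) \<in> {1..r*d}" by simp
qed

lemma dec:
  assumes "(1::nat) + a mod d + d*c = 1 + b mod d + d*c'" "d \<ge> 1"
  shows "a mod d = b mod d \<and> c = c'"
proof -
  have "(a mod d + d*c) mod d = (b mod d + d*c') mod d" using assms by simp
  then have m: "a mod d = b mod d" by simp
  then have "d*c = d*c'" using assms by simp
  then show ?thesis using m assms by simp
qed

lemma step:
  fixes x0 x1 t d :: nat
  assumes "int x1 - int x0 = int t" "t \<ge> 1" "x1 mod d = x0 mod d" "d \<ge> 1"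
  shows "t = d * (x1 div d - x0 div d) \<and> x1 div d - x0 div d \<ge> 1
         \<and> int (x1 div d + 1) - int (x0 div d + 1) = int (x1 div d - x0 div d)"
proof -
  have x: "x1 = x0 + t" using assms(1) by linarith
  have le: "x0 div d \<le> x1 div d" using x by (simp add: div_le_mono)
  have e1: "x1 div d * d + x1 mod d = x1" by simp
  have e0: "x0 div d * d + x0 mod d = x0" by simp
  have "t = x1 div d * d - x0 div d * d" using e1 e0 x assms(3) by linarith
  also have "\<dots> = d * (x1 div d - x0 div d)" by (simp add: diff_mult_distrib2 mult.commute)
  finally have t: "t = d * (x1 div d - x0 div d)" .
  then have "x1 div d - x0 div d \<ge> 1" using assms(2) by (cases "x1 div d - x0 div d") auto
  then show ?thesis using t le by simp
qed

theorem mainTheorem3: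
  fixes A :: "nat set" and d r :: nat
  assumes "A \<subseteq> {1..}" and "d \<ge> 1" and "r \<ge> 1"
    and "accessible (r * d) A"
  shows "accessible r {b. b \<ge> 1 \<and> d * b \<in> A} \<and> accessible r {a \<in> A. a mod d = 0}"
proof
  show "accessible r {b. b \<ge> 1 \<and> d * b \<in> A}"
    unfolding accessible_def
  proof (intro allI impI)
    fix \<chi> :: "nat \<Rightarrow> nat" and k :: nat
    assume chi: "r_coloring r \<chi>" and k: "k \<ge> 1"
    define \<psi> where "\<psi> = (\<lambda>n. 1 + n mod d + d*(\<chi> (n div d + 1) - 1))"
    have ff: "\<forall>n\<ge>1. (\<lambda>n. n div d + 1) n \<ge> (1::nat)" by simp
    have psi: "r_coloring (r*d) \<psi>" unfolding \<psi>_def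
      using col[OF chi assms(2) ff assms(3)] by (simp only:)
    obtain x where dx: "diffseq_in_N A k x" and mx: "monochromatic \<psi> k x"
      using assms(4)[unfolded accessible_def, rule_format, OF psi k] by blast
    have eq: "x i mod d = x j mod d \<and> \<chi> (x i div d + 1) = \<chi> (x j div d + 1)"
      if "i<k" "j<k" for i j
    proof -
      from mx that have "\<psi> (x i) = \<psi> (x j)" unfolding monochromatic_def by blast
      then have "x i mod d = x j mod d \<and> \<chi> (x i div d + 1) - 1 = \<chi> (x j div d + 1) - 1"
        unfolding \<psi>_def by (rule dec[OF _ assms(2)])
      moreover have "\<chi> (x i div d + 1) \<ge> 1" "\<chi> (x j div d + 1) \<ge> 1"
        using chi unfolding r_coloring_def by auto
      ultimately show ?thesis by auto
    qed
    define y where "y = (\<lambda>i. x i div d + 1)"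
    show "\<exists>y. diffseq_in_N {b. b \<ge> 1 \<and> d * b \<in> A} k y \<and> monochromatic \<chi> k y"
    proof (intro exI conjI)
      show "monochromatic \<chi> k y" using eq unfolding monochromatic_def y_def by blast
      show "diffseq_in_N {b. b \<ge> 1 \<and> d * b \<in> A} k y" unfolding diffseq_in_N_def
      proof (intro conjI allI impI)
        fix i assume "i < k" show "y i \<ge> 1" by (simp add: y_def)
      next
        fix i assume i: "i+1 < k"
        then obtain t where t: "t\<in>A" "int (x (i+1)) - int (x i) = int t"
          using dx by (auto simp: diffseq_in_N_def)
        have t1: "t \<ge> 1" using assms(1) t by auto
        have m: "x (i+1) mod d = x i mod d" using eq[of "i+1" i] i by auto
        note st = step[OF t(2) t1 m assms(2)]
        show "\<exists>s\<in>{b. b \<ge> 1 \<and> d * b \<in> A}. int (y (i+1)) - int (y i) = int s"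
        proof (rule bexI[where x="x (i+1) div d - x i div d"])
          show "int (y (i+1)) - int (y i) = int (x (i+1) div d - x i div d)"
            using st unfolding y_def by blast
          have "d * (x (i+1) div d - x i div d) \<in> A" using st t(1) by metis
          then show "x (i+1) div d - x i div d \<in> {b. b \<ge> 1 \<and> d * b \<in> A}"
            using st by blast
        qed
      qed
    qed
  qed
next
  show "accessible r {a \<in> A. a mod d = 0}"
    unfolding accessible_def
  proof (intro allI impI)
    fix \<chi> :: "nat \<Rightarrow> nat" and k :: nat
    assume chi: "r_coloring r \<chi>" and k: "k \<ge> 1"
    define \<psi> where "\<psi> = (\<lambda>n. 1 + n mod d + d*(\<chi> n - 1))"
    have ff: "\<forall>n\<ge>1. (\<lambda>n. n) n \<ge> (1::nat)" by simp
    have psi: "r_coloring (r*d) \<psi>" unfolding \<psi>_def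
      using col[OF chi assms(2) ff assms(3)] by (simp only:)
    obtain x where dx: "diffseq_in_N A k x" and mx: "monochromatic \<psi> k x"
      using assms(4)[unfolded accessible_def, rule_format, OF psi k] by blast
    have eq: "x i mod d = x j mod d \<and> \<chi> (x i) = \<chi> (x j)"
      if "i<k" "j<k" for i j
    proof -
      from mx that have "\<psi> (x i) = \<psi> (x j)" unfolding monochromatic_def by blast
      then have "x i mod d = x j mod d \<and> \<chi> (x i) - 1 = \<chi> (x j) - 1"
        unfolding \<psi>_def by (rule dec[OF _ assms(2)])
      moreover have "x i \<ge> 1" "x j \<ge> 1" using dx that by (auto simp: diffseq_in_N_def)
      then have "\<chi> (x i) \<ge> 1" "\<chi> (x j) \<ge> 1"
        using chi unfolding r_coloring_def by auto
      ultimately show ?thesis by auto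
    qed
    show "\<exists>y. diffseq_in_N {a \<in> A. a mod d = 0} k y \<and> monochromatic \<chi> k y"
    proof (intro exI conjI)
      show "monochromatic \<chi> k x" using eq unfolding monochromatic_def by blast
      show "diffseq_in_N {a \<in> A. a mod d = 0} k x" unfolding diffseq_in_N_def
      proof (intro conjI allI impI)
        fix i assume "i < k" then show "x i \<ge> 1" using dx by (simp add: diffseq_in_N_def)
      next
        fix i assume i: "i+1 < k"
        then obtain t where t: "t\<in>A" "int (x (i+1)) - int (x i) = int t"
          using dx by (auto simp: diffseq_in_N_def)
        have t1: "t \<ge> 1" using assms(1) t by auto
        have m: "x (i+1) mod d = x i mod d" using eq[of "i+1" i] i by auto
        from step[OF t(2) t1 m assms(2)] have "t mod d = 0" by simp
        then show "\<exists>s\<in>{a \<in> A. a mod d = 0}. int (x (i+1)) - int (x i) = int s"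
          using t by auto
      qed
    qed
  qed
qed

end
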